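(* In any block graph $G$ there exists a vertex $w$ with $\Gamma(w)=\Gamma(G)$, and if $\Gamma(G)>\omega(G)$ then every vertex $w$ with $\Gamma(w)=\Gamma(G)$ is a cut-vertex of $G$.
   Context: A Grundy-coloring of a graph $G$ is a proper vertex coloring with nonempty color classes $C_1,\ldots,C_k$ (color $i$ on $C_i$) such that for all $i<j$ every vertex of $C_j$ has a neighbor in $C_i$. $\Gamma(G)$ is the maximum number of colors in a Grundy-coloring of $G$, and for a vertex $v$, $\Gamma(v)$ is the maximum color that $v$ receives in some Grundy-coloring of $G$. $\omega(G)$ is the size of a largest clique. A block of a graph is a maximal 2-connected subgraph or a bridge (as a $K_2$); a block graph is a graph all of whose blocks are complete graphs. A cut-vertex is a vertex whose removal increases the number of connected components. *)

theory Defs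
  imports Main
begin

definition graph :: "'a set \<Rightarrow> ('a \<Rightarrow> 'a \<Rightarrow> bool) \<Rightarrow> bool" where
  "graph V E \<longleftrightarrow> finite V \<and> (\<forall>x y. E x y \<longrightarrow> x \<in> V \<and> y \<in> V)
     \<and> (\<forall>x y. E x y \<longrightarrow> E y x) \<and> (\<forall>x. \<not> E x x)"

definition reach :: "'a set \<Rightarrow> ('a \<Rightarrow> 'a \<Rightarrow> bool) \<Rightarrow> 'a \<Rightarrow> 'a \<Rightarrow> bool" where
  "reach S E x y \<longleftrightarrow> x \<in> S \<and> (\<lambda>a b. a \<in> S \<and> b \<in> S \<and> E a b)\<^sup>*\<^sup>* x y"

definition components :: "'a set \<Rightarrow> ('a \<Rightarrow> 'a \<Rightarrow> bool) \<Rightarrow> 'a set set" where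
  "components S E = (\<lambda>x. {y \<in> S. reach S E x y}) ` S"

definition num_components :: "'a set \<Rightarrow> ('a \<Rightarrow> 'a \<Rightarrow> bool) \<Rightarrow> nat" where
  "num_components S E = card (components S E)"

definition connected_on :: "'a set \<Rightarrow> ('a \<Rightarrow> 'a \<Rightarrow> bool) \<Rightarrow> bool" where
  "connected_on S E \<longleftrightarrow> S \<noteq> {} \<and> (\<forall>x\<in>S. \<forall>y\<in>S. reach S E x y)"

definition cut_vertex :: "'a set \<Rightarrow> ('a \<Rightarrow> 'a \<Rightarrow> bool) \<Rightarrow> 'a \<Rightarrow> bool" where
  "cut_vertex S E v \<longleftrightarrow> v \<in> S \<and> num_components (S - {v}) E > num_components S E"

text \<open>Block: maximal connected (induced) subgraph without a cut-vertex.  For at least two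
  vertices these are exactly the maximal 2-connected subgraphs and the bridges.\<close>
definition is_block :: "'a set \<Rightarrow> ('a \<Rightarrow> 'a \<Rightarrow> bool) \<Rightarrow> 'a set \<Rightarrow> bool" where
  "is_block V E B \<longleftrightarrow> B \<subseteq> V \<and> connected_on B E \<and> \<not> (\<exists>v\<in>B. cut_vertex B E v)
     \<and> (\<forall>B'. B \<subset> B' \<and> B' \<subseteq> V \<and> connected_on B' E \<longrightarrow> (\<exists>v\<in>B'. cut_vertex B' E v))"

definition is_clique :: "('a \<Rightarrow> 'a \<Rightarrow> bool) \<Rightarrow> 'a set \<Rightarrow> bool" where
  "is_clique E K \<longleftrightarrow> (\<forall>x\<in>K. \<forall>y\<in>K. x \<noteq> y \<longrightarrow> E x y)"

definition block_graph :: "'a set \<Rightarrow> ('a \<Rightarrow> 'a \<Rightarrow> bool) \<Rightarrow> bool" where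
  "block_graph V E \<longleftrightarrow> (\<forall>B. is_block V E B \<longrightarrow> is_clique E B)"

definition clique_number :: "'a set \<Rightarrow> ('a \<Rightarrow> 'a \<Rightarrow> bool) \<Rightarrow> nat" where
  "clique_number V E = Max {card K | K. K \<subseteq> V \<and> is_clique E K}"

definition grundy_coloring :: "'a set \<Rightarrow> ('a \<Rightarrow> 'a \<Rightarrow> bool) \<Rightarrow> ('a \<Rightarrow> nat) \<Rightarrow> nat \<Rightarrow> bool" where
  "grundy_coloring V E c k \<longleftrightarrow> c ` V = {1..k}
     \<and> (\<forall>x\<in>V. \<forall>y\<in>V. E x y \<longrightarrow> c x \<noteq> c y)
     \<and> (\<forall>v\<in>V. \<forall>i. 1 \<le> i \<and> i < c v \<longrightarrow> (\<exists>u\<in>V. E v u \<and> c u = i))"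

definition grundy_number :: "'a set \<Rightarrow> ('a \<Rightarrow> 'a \<Rightarrow> bool) \<Rightarrow> nat" where
  "grundy_number V E = Max {k. \<exists>c. grundy_coloring V E c k}"

definition grundy_vertex :: "'a set \<Rightarrow> ('a \<Rightarrow> 'a \<Rightarrow> bool) \<Rightarrow> 'a \<Rightarrow> nat" where
  "grundy_vertex V E w = Max {c w | c. \<exists>k. grundy_coloring V E c k}"

end

theory Submission
  imports Defs
begin


lemma reach_refl: "x \<in> S \<Longrightarrow> reach S E x x"
  by (simp add: reach_def)

lemma reach_edge: "x \<in> S \<Longrightarrow> y \<in> S \<Longrightarrow> E x y \<Longrightarrow> reach S E x y"
  by (auto simp: reach_def)

lemma reach_trans: "reach S E x y \<Longrightarrow> reach S E y z \<Longrightarrow> reach S E x z"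
  unfolding reach_def by (auto intro: rtranclp_trans)

lemma rt_in: "(\<lambda>a b. a \<in> S \<and> b \<in> S \<and> E a b)\<^sup>*\<^sup>* x y \<Longrightarrow> x \<in> S \<Longrightarrow> y \<in> S"
  by (induction rule: rtranclp_induct) auto

lemma reach_in: "reach S E x y \<Longrightarrow> y \<in> S \<and> x \<in> S"
  unfolding reach_def using rt_in[of S E x y] by simp

lemma rt_mono: "(\<lambda>a b. a \<in> S \<and> b \<in> S \<and> E a b)\<^sup>*\<^sup>* x y \<Longrightarrow> S \<subseteq> T
  \<Longrightarrow> (\<lambda>a b. a \<in> T \<and> b \<in> T \<and> E a b)\<^sup>*\<^sup>* x y"
proof (induction rule: rtranclp_induct)
  case base then show ?case by simp
next
  case (step y z)
  then have "(\<lambda>a b. a \<in> T \<and> b \<in> T \<and> E a b) y z" by auto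
  then show ?case by (rule rtranclp.rtrancl_into_rtrancl[OF step.IH[OF step.prems]])
qed

lemma reach_mono: "S \<subseteq> T \<Longrightarrow> reach S E x y \<Longrightarrow> reach T E x y"
  unfolding reach_def using rt_mono[of S E x y T] by auto

lemma rt_sym:
  assumes "(\<lambda>a b. a \<in> S \<and> b \<in> S \<and> E a b)\<^sup>*\<^sup>* x y" "\<forall>a b. E a b \<longrightarrow> E b a"
  shows "(\<lambda>a b. a \<in> S \<and> b \<in> S \<and> E a b)\<^sup>*\<^sup>* y x"
  using assms(1)
proof (induction rule: rtranclp_induct)
  case base then show ?case by simp
next
  case (step y z)
  then have "(\<lambda>a b. a \<in> S \<and> b \<in> S \<and> E a b) z y" using assms(2) by auto
  then show ?case by (rule converse_rtranclp_into_rtranclp[OF _ step.IH])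
qed

lemma reach_sym: "\<forall>a b. E a b \<longrightarrow> E b a \<Longrightarrow> reach S E x y \<Longrightarrow> reach S E y x"
proof -
  assume s: "\<forall>a b. E a b \<longrightarrow> E b a" and r: "reach S E x y"
  have y: "y \<in> S" using reach_in[OF r] by simp
  have r2: "(\<lambda>a b. a \<in> S \<and> b \<in> S \<and> E a b)\<^sup>*\<^sup>* x y" using r unfolding reach_def by simp
  have "(\<lambda>a b. a \<in> S \<and> b \<in> S \<and> E a b)\<^sup>*\<^sup>* y x"
    by (rule rt_sym[OF r2 s])
  then show ?thesis unfolding reach_def using y by simp
qed

lemma comp_eq: "\<forall>a b. E a b \<longrightarrow> E b a \<Longrightarrow> reach S E x y
  \<Longrightarrow> {z \<in> S. reach S E x z} = {z \<in> S. reach S E y z}"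
proof -
  assume s: "\<forall>a b. E a b \<longrightarrow> E b a" and r: "reach S E x y"
  have r2: "reach S E y x" using reach_sym[OF s r] .
  show ?thesis
  proof (intro Collect_cong conj_cong refl iffI)
    fix z assume "reach S E x z" then show "reach S E y z" using reach_trans[OF r2] by blast
  next
    fix z assume "reach S E y z" then show "reach S E x z" using reach_trans[OF r] by blast
  qed
qed

lemma connected_num: "connected_on S E \<Longrightarrow> num_components S E = 1"
proof -
  assume c: "connected_on S E"
  then have "components S E = {S}"
    unfolding components_def connected_on_def by auto
  then show ?thesis by (simp add: num_components_def)
qed

lemma connected_intro: "\<forall>a b. E a b \<longrightarrow> E b a \<Longrightarrow> r \<in> S \<Longrightarrow> \<forall>y\<in>S. reach S E r y
  \<Longrightarrow> connected_on S E"
proof -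
  assume s: "\<forall>a b. E a b \<longrightarrow> E b a" and r: "r \<in> S" and a: "\<forall>y\<in>S. reach S E r y"
  have "reach S E x y" if "x \<in> S" "y \<in> S" for x y
  proof -
    have "reach S E r x" using a that by blast
    then have "reach S E x r" by (rule reach_sym[OF s])
    moreover have "reach S E r y" using a that by blast
    ultimately show ?thesis by (rule reach_trans)
  qed
  then show ?thesis unfolding connected_on_def using r by blast
qed

fun chain :: "('a \<Rightarrow> 'a \<Rightarrow> bool) \<Rightarrow> 'a list \<Rightarrow> bool" where
  "chain E [] = True"
| "chain E [x] = True"
| "chain E (x # y # ys) = (E x y \<and> chain E (y # ys))"

lemma chain_Cons: "chain E (x # ys) \<longleftrightarrow> chain E ys \<and> (ys \<noteq> [] \<longrightarrow> E x (hd ys))"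
  by (cases ys) auto

lemma chain_append: "chain E (xs @ ys) \<Longrightarrow> chain E xs \<and> chain E ys"
proof (induction xs)
  case Nil then show ?case by simp
next
  case (Cons x xs)
  then have "chain E (xs @ ys)" by (simp add: chain_Cons)
  then have "chain E xs \<and> chain E ys" using Cons.IH by blast
  moreover have "xs \<noteq> [] \<longrightarrow> E x (hd xs)" using Cons.prems by (auto simp: chain_Cons)
  ultimately show ?case by (simp add: chain_Cons)
qed

lemma chain_snoc: "chain E xs \<Longrightarrow> xs \<noteq> [] \<Longrightarrow> E (last xs) c \<Longrightarrow> chain E (xs @ [c])"
proof (induction xs)
  case Nil then show ?case by simp
next
  case (Cons x xs)
  show ?case
  proof (cases "xs = []")
    case True then show ?thesis using Cons.prems by simp
  next
    case False
    then have "chain E (xs @ [c])" using Cons by (simp add: chain_Cons)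
    then show ?thesis using Cons.prems False by (simp add: chain_Cons)
  qed
qed

lemma chain_reach_hd: "chain E xs \<Longrightarrow> set xs \<subseteq> T \<Longrightarrow> y \<in> set xs \<Longrightarrow> reach T E (hd xs) y"
proof (induction xs)
  case Nil then show ?case by simp
next
  case (Cons x xs)
  show ?case
  proof (cases "y = x")
    case True then show ?thesis using Cons.prems by (simp add: reach_refl)
  next
    case False
    then have y: "y \<in> set xs" using Cons.prems by simp
    then have ne: "xs \<noteq> []" by auto
    have "reach T E (hd xs) y" using Cons y by (simp add: chain_Cons)
    moreover have "reach T E x (hd xs)" using Cons.prems ne by (intro reach_edge) (auto simp: chain_Cons)
    ultimately show ?thesis using reach_trans by fastforce
  qed
qed

lemma chain_reach_last: "chain E xs \<Longrightarrow> set xs \<subseteq> T \<Longrightarrow> y \<in> set xs \<Longrightarrow> reach T E y (last xs)"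
proof (induction xs arbitrary: y)
  case Nil then show ?case by simp
next
  case (Cons x xs)
  show ?case
  proof (cases "xs = []")
    case True then show ?thesis using Cons.prems by (simp add: reach_refl)
  next
    case ne: False
    have IH: "\<And>z. z \<in> set xs \<Longrightarrow> reach T E z (last xs)" using Cons by (simp add: chain_Cons)
    show ?thesis
    proof (cases "y \<in> set xs")
      case True then show ?thesis using IH ne by simp
    next
      case False
      then have "y = x" using Cons.prems by simp
      moreover have "reach T E x (hd xs)" using Cons.prems ne by (intro reach_edge) (auto simp: chain_Cons)
      moreover have "reach T E (hd xs) (last xs)" using IH ne by simp
      ultimately show ?thesis using ne reach_trans by fastforce
    qed
  qed
qed

lemma distinct_chain:
  assumes "(\<lambda>a b. a \<in> T \<and> b \<in> T \<and> E a b)\<^sup>*\<^sup>* a b" "a \<in> T"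
  shows "\<exists>xs. xs \<noteq> [] \<and> hd xs = a \<and> last xs = b \<and> distinct xs \<and> chain E xs \<and> set xs \<subseteq> T"
  using assms(1)
proof (induction rule: rtranclp_induct)
  case base then show ?case using assms(2) by (intro exI[of _ "[a]"]) auto
next
  case (step b c)
  then obtain xs where xs: "xs \<noteq> []" "hd xs = a" "last xs = b" "distinct xs" "chain E xs" "set xs \<subseteq> T"
    by blast
  show ?case
  proof (cases "c \<in> set xs")
    case True
    then obtain ys zs where yz: "xs = ys @ c # zs" by (meson split_list)
    then have "xs = (ys @ [c]) @ zs" by simp
    then have "chain E (ys @ [c])" using xs chain_append by metis
    moreover have "hd (ys @ [c]) = a" using xs yz by (cases ys) auto
    moreover have "distinct (ys @ [c])" using xs(4) unfolding yz by simp
    moreover have "set (ys @ [c]) \<subseteq> T" using xs(6) unfolding yz by auto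
    ultimately show ?thesis by (intro exI[of _ "ys @ [c]"]) simp
  next
    case False
    have "chain E (xs @ [c])" using xs step chain_snoc[of E xs c] by simp
    moreover have "hd (xs @ [c]) = a" using xs by simp
    moreover have "distinct (xs @ [c])" using xs False by simp
    moreover have "set (xs @ [c]) \<subseteq> T" using xs step by simp
    ultimately show ?thesis by (intro exI[of _ "xs @ [c]"]) simp
  qed
qed



lemma graph_sym: "graph V E \<Longrightarrow> \<forall>a b. E a b \<longrightarrow> E b a"
  by (simp add: graph_def)
lemma graph_in: "graph V E \<Longrightarrow> E x y \<Longrightarrow> x \<in> V \<and> y \<in> V"
  by (simp add: graph_def)
lemma graph_irr: "graph V E \<Longrightarrow> \<not> E x x"
  by (simp add: graph_def)

lemma not_cut_reach:
  assumes g: "graph V E" and w: "w \<in> V" and wu: "E w u" and wv: "E w v"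
    and nc: "\<not> cut_vertex V E w"
  shows "reach (V - {w}) E u v"
proof (rule ccontr)
  assume nr: "\<not> reach (V - {w}) E u v"
  have s: "\<forall>a b. E a b \<longrightarrow> E b a" using graph_sym[OF g] .
  have fin: "finite V" using g by (simp add: graph_def)
  define V' where "V' = V - {w}"
  define cV where "cV x = {y\<in>V. reach V E x y}" for x
  define cV' where "cV' x = {y\<in>V'. reach V' E x y}" for x
  define F where "F C = cV (SOME y. y \<in> C)" for C
  have Fx: "F (cV' x) = cV x" if x: "x \<in> V'" for x
  proof -
    have "x \<in> cV' x" using x reach_refl unfolding cV'_def by fastforce
    then have "(SOME y. y \<in> cV' x) \<in> cV' x" by (rule someI)
    then have "reach V' E x (SOME y. y \<in> cV' x)" unfolding cV'_def by simp
    then have "reach V E x (SOME y. y \<in> cV' x)" by (rule reach_mono[rotated]) (simp add: V'_def)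
    then have "cV x = cV (SOME y. y \<in> cV' x)" unfolding cV_def by (rule comp_eq[OF s])
    then show ?thesis unfolding F_def by simp
  qed
  have uV: "u \<in> V" and vV: "v \<in> V" using graph_in[OF g wu] graph_in[OF g wv] by auto
  have "u \<noteq> w" "v \<noteq> w" using graph_irr[OF g] wu wv by auto
  then have uV': "u \<in> V'" and vV': "v \<in> V'" using uV vV by (auto simp: V'_def)
  have cwu: "cV w = cV u" unfolding cV_def by (rule comp_eq[OF s reach_edge[of w V u E, OF w uV wu]])
  have cwv: "cV w = cV v" unfolding cV_def by (rule comp_eq[OF s reach_edge[of w V v E, OF w vV wv]])
  have comps': "components V' E = cV' ` V'" unfolding components_def cV'_def by simp
  have comps: "components V E = cV ` V" unfolding components_def cV_def by simp
  have "F ` components V' E = cV ` V'" unfolding comps' image_image using Fx by simp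
  also have "\<dots> = cV ` V"
  proof
    show "cV ` V' \<subseteq> cV ` V" by (auto simp: V'_def)
  next
    show "cV ` V \<subseteq> cV ` V'"
    proof
      fix C assume "C \<in> cV ` V"
      then obtain x where x: "x \<in> V" "C = cV x" by blast
      show "C \<in> cV ` V'"
      proof (cases "x = w")
        case True then show ?thesis using x cwu uV' by blast
      next
        case False then show ?thesis using x by (auto simp: V'_def)
      qed
    qed
  qed
  finally have img: "F ` components V' E = components V E" using comps by simp
  have neq: "cV' u \<noteq> cV' v"
  proof
    assume "cV' u = cV' v"
    moreover have "v \<in> cV' v" using vV' reach_refl unfolding cV'_def by fastforce
    ultimately have "v \<in> cV' u" by simp
    then have "reach V' E u v" unfolding cV'_def by simp
    then show False using nr V'_def by simp
  qed
  have Feq: "F (cV' u) = F (cV' v)" using Fx uV' vV' cwu cwv by simp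
  have ninj: "\<not> inj_on F (components V' E)"
    using neq Feq uV' vV' comps' unfolding inj_on_def by blast
  have finc: "finite (components V' E)" using comps' fin V'_def by simp
  have le: "card (F ` components V' E) \<le> card (components V' E)" by (rule card_image_le[OF finc])
  have "card (F ` components V' E) \<noteq> card (components V' E)"
    using eq_card_imp_inj_on[OF finc] ninj by blast
  then have "card (components V E) < card (components V' E)" using le img by simp
  then have "cut_vertex V E w" unfolding cut_vertex_def num_components_def V'_def using w by simp
  then show False using nc by simp
qed

lemma block_exists:
  assumes g: "graph V E" and SV: "S \<subseteq> V" and c: "connected_on S E"
    and nc: "\<not> (\<exists>x\<in>S. cut_vertex S E x)"
  shows "\<exists>B. is_block V E B \<and> S \<subseteq> B"
proof -
  define A where "A = {B. S \<subseteq> B \<and> B \<subseteq> V \<and> connected_on B E \<and> \<not> (\<exists>x\<in>B. cut_vertex B E x)}"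
  have fin: "finite V" using g by (simp add: graph_def)
  have "A \<subseteq> Pow V" unfolding A_def by blast
  moreover have "finite (Pow V)" using fin by simp
  ultimately have finA: "finite A" by (rule finite_subset)
  have "S \<in> A" unfolding A_def using SV c nc by simp
  then have "A \<noteq> {}" by blast
  then obtain m where m: "m \<in> A" and mx: "\<forall>b\<in>A. m \<le> b \<longrightarrow> m = b"
    using finite_has_maximal[OF finA] by blast
  have m1: "S \<subseteq> m" and m2: "m \<subseteq> V" and m3: "connected_on m E"
    and m4: "\<not> (\<exists>v\<in>m. cut_vertex m E v)" using m unfolding A_def by simp_all
  have "is_block V E m"
    unfolding is_block_def
  proof (intro conjI allI impI)
    show "m \<subseteq> V" "connected_on m E" "\<not> (\<exists>v\<in>m. cut_vertex m E v)" using m2 m3 m4 .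
  next
    fix B' assume B': "m \<subset> B' \<and> B' \<subseteq> V \<and> connected_on B' E"
    show "\<exists>v\<in>B'. cut_vertex B' E v"
    proof (rule ccontr)
      assume nB: "\<not> (\<exists>v\<in>B'. cut_vertex B' E v)"
      have "S \<subseteq> B'" using m1 B' by blast
      then have "B' \<in> A" using B' nB unfolding A_def by simp
      then have "m = B'" using mx B' by blast
      then show False using B' by simp
    qed
  qed
  then show ?thesis using m1 by blast
qed

lemma nbrs_adj:
  assumes g: "graph V E" and bg: "block_graph V E" and w: "w \<in> V"
    and nc: "\<not> cut_vertex V E w" and wu: "E w u" and wv: "E w v" and uv: "u \<noteq> v"
  shows "E u v"
proof (rule ccontr)
  assume nuv: "\<not> E u v"
  have s: "\<forall>a b. E a b \<longrightarrow> E b a" using graph_sym[OF g] .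
  have r: "reach (V - {w}) E u v" by (rule not_cut_reach[OF g w wu wv nc])
  then have rr: "(\<lambda>a b. a \<in> V - {w} \<and> b \<in> V - {w} \<and> E a b)\<^sup>*\<^sup>* u v" "u \<in> V - {w}"
    unfolding reach_def by auto
  obtain xs where xs: "xs \<noteq> []" "hd xs = u" "last xs = v" "distinct xs" "chain E xs"
    "set xs \<subseteq> V - {w}"
    using distinct_chain[OF rr(1) rr(2)] by blast
  define S where "S = insert w (set xs)"
  have wxs: "w \<notin> set xs" using xs(6) by auto
  have uxs: "u \<in> set xs" using xs(1,2) hd_in_set by blast
  have vxs: "v \<in> set xs" using xs(1,3) last_in_set by blast
  have SV: "S \<subseteq> V" using xs(6) w S_def by auto
  have conS: "connected_on S E"
  proof (rule connected_intro[OF s])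
    show "w \<in> S" by (simp add: S_def)
    show "\<forall>y\<in>S. reach S E w y"
    proof
      fix y assume y: "y \<in> S"
      show "reach S E w y"
      proof (cases "y = w")
        case True then show ?thesis using reach_refl y by fastforce
      next
        case False
        then have "y \<in> set xs" using y S_def by simp
        moreover have "set xs \<subseteq> S" by (auto simp: S_def)
        ultimately have "reach S E (hd xs) y" using chain_reach_hd[OF xs(5)] by blast
        moreover have "reach S E w u" by (rule reach_edge) (use uxs wu in \<open>auto simp: S_def\<close>)
        ultimately show ?thesis using xs(2) reach_trans[of S E w u y] by simp
      qed
    qed
  qed
  have conSx: "connected_on (S - {x}) E" if x: "x \<in> S" for x
  proof (cases "x = w")
    case True
    then have T: "S - {x} = set xs" using wxs S_def by auto
    show ?thesis unfolding T
    proof (rule connected_intro[OF s uxs])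
      show "\<forall>y\<in>set xs. reach (set xs) E u y" using chain_reach_hd[OF xs(5)] xs(2) by blast
    qed
  next
    case False
    then have "x \<in> set xs" using x S_def by simp
    then obtain as bs where xsd: "xs = as @ x # bs" by (meson split_list)
    have dis: "x \<notin> set as" "x \<notin> set bs" using xs(4) xsd by auto
    define T where "T = insert w (set as \<union> set bs)"
    have T: "S - {x} = T" unfolding S_def T_def xsd using dis False by auto
    have "chain E (as @ (x # bs))" using xs(5) xsd by simp
    then have cas: "chain E as" and cxbs: "chain E (x # bs)" using chain_append by blast+
    have cbs: "chain E bs" using cxbs by (simp add: chain_Cons)
    have wT: "w \<in> T" by (simp add: T_def)
    show ?thesis unfolding T
    proof (rule connected_intro[OF s wT], rule ballI)
      fix y assume y: "y \<in> T"
      show "reach T E w y"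
      proof (cases "y = w")
        case True then show ?thesis using reach_refl wT by fastforce
      next
        case False
        then have "y \<in> set as \<or> y \<in> set bs" using y T_def by simp
        then show ?thesis
        proof
          assume ya: "y \<in> set as"
          then have ne: "as \<noteq> []" by auto
          then have hu: "hd as = u" using xs(2) xsd by simp
          then have uT: "u \<in> T" using ne hd_in_set T_def by fastforce
          have "reach T E (hd as) y" by (rule chain_reach_hd[OF cas _ ya]) (auto simp: T_def)
          moreover have "reach T E w u" by (rule reach_edge[of w T u E, OF wT uT wu])
          ultimately show ?thesis using hu reach_trans[of T E w u y] by simp
        next
          assume yb: "y \<in> set bs"
          then have ne: "bs \<noteq> []" by auto
          then have lv: "last bs = v" using xs(3) xsd by simp
          then have vT: "v \<in> T" using ne last_in_set T_def by fastforce
          have "reach T E y (last bs)" by (rule chain_reach_last[OF cbs _ yb]) (auto simp: T_def)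
          then have "reach T E v y" using lv reach_sym[OF s, of T y v] by simp
          moreover have "reach T E w v" by (rule reach_edge[of w T v E, OF wT vT wv])
          ultimately show ?thesis by (rule reach_trans[rotated])
        qed
      qed
    qed
  qed
  have ncS: "\<not> (\<exists>x\<in>S. cut_vertex S E x)"
  proof
    assume "\<exists>x\<in>S. cut_vertex S E x"
    then obtain x where x: "x \<in> S" "cut_vertex S E x" by blast
    have "num_components (S - {x}) E = 1" using connected_num conSx[OF x(1)] by blast
    moreover have "num_components S E = 1" using connected_num conS by blast
    ultimately show False using x(2) unfolding cut_vertex_def by simp
  qed
  obtain B where B: "is_block V E B" "S \<subseteq> B" using block_exists[OF g SV conS ncS] by blast
  have "is_clique E B" using bg B(1) unfolding block_graph_def by blast
  moreover have "u \<in> B" "v \<in> B" using B(2) uxs vxs S_def by auto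
  ultimately show False using uv nuv unfolding is_clique_def by blast
qed



lemma grundy_exists:
  assumes g: "graph V E" and ne: "V \<noteq> {}"
  shows "\<exists>c k. grundy_coloring V E c k"
proof -
  have fin: "finite V" using g by (simp add: graph_def)
  obtain f :: "'a \<Rightarrow> nat" and n where inj: "inj_on f V" using finite_imp_inj_to_nat_seg[OF fin] by blast
  define P where "P c = ((\<forall>x\<in>V. 1 \<le> c x) \<and> (\<forall>x\<in>V. \<forall>y\<in>V. E x y \<longrightarrow> c x \<noteq> c y))" for c :: "'a \<Rightarrow> nat"
  have "P (\<lambda>x. f x + 1)"
    unfolding P_def
  proof (intro conjI ballI impI)
    fix x y assume xy: "x \<in> V" "y \<in> V" "E x y"
    then have "x \<noteq> y" using graph_irr[OF g] by blast
    then show "f x + 1 \<noteq> f y + 1" using inj xy unfolding inj_on_def by auto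
  qed simp
  then obtain c where Pc: "P c" and minc: "\<forall>d. P d \<longrightarrow> sum c V \<le> sum d V"
    using ex_has_least_nat[of P "\<lambda>x. f x + 1" "\<lambda>c. sum c V"] by blast
  have pos: "\<forall>x\<in>V. 1 \<le> c x" and prp: "\<forall>x\<in>V. \<forall>y\<in>V. E x y \<longrightarrow> c x \<noteq> c y"
    using Pc unfolding P_def by auto
  have gr: "\<exists>u\<in>V. E v u \<and> c u = i" if v: "v \<in> V" and i: "1 \<le> i" "i < c v" for v i
  proof (rule ccontr)
    assume nn: "\<not> (\<exists>u\<in>V. E v u \<and> c u = i)"
    define d where "d = c(v := i)"
    have "P d"
      unfolding P_def
    proof (intro conjI ballI impI)
      fix x assume "x \<in> V" then show "1 \<le> d x" using pos i by (simp add: d_def)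
    next
      fix x y assume xy: "x \<in> V" "y \<in> V" "E x y"
      have "x \<noteq> y" using graph_irr[OF g] xy by blast
      show "d x \<noteq> d y"
      proof (cases "x = v")
        case True then show ?thesis using nn xy \<open>x \<noteq> y\<close> by (auto simp: d_def)
      next
        case False
        show ?thesis
        proof (cases "y = v")
          case True
          have "E v x" using xy True graph_sym[OF g] by blast
          then show ?thesis using nn xy True False by (auto simp: d_def)
        next
          case False2: False
          then show ?thesis using prp xy False by (simp add: d_def)
        qed
      qed
    qed
    then have "sum c V \<le> sum d V" using minc by blast
    moreover have "sum d V < sum c V"
      by (rule sum_strict_mono_ex1[OF fin]) (use v i in \<open>auto simp: d_def\<close>)
    ultimately show False by simp
  qed
  define k where "k = Max (c ` V)"
  have finc: "finite (c ` V)" using fin by simp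
  have nec: "c ` V \<noteq> {}" using ne by simp
  have "c ` V = {1..k}"
  proof
    show "c ` V \<subseteq> {1..k}" using pos Max_ge[OF finc] unfolding k_def by auto
  next
    show "{1..k} \<subseteq> c ` V"
    proof
      fix i assume i: "i \<in> {1..k}"
      have "k \<in> c ` V" unfolding k_def by (rule Max_in[OF finc nec])
      then obtain v where v: "v \<in> V" "c v = k" by blast
      show "i \<in> c ` V"
      proof (cases "i = k")
        case True then show ?thesis using v by blast
      next
        case False
        then have "i < c v" using i v by simp
        then obtain u where "u \<in> V" "c u = i" using gr[OF v(1)] i by force
        then show ?thesis by blast
      qed
    qed
  qed
  then have "grundy_coloring V E c k" unfolding grundy_coloring_def using prp gr by blast
  then show ?thesis by blast
qed

lemma grundy_bound:
  assumes g: "graph V E" and gc: "grundy_coloring V E c k"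
  shows "k \<le> card V"
proof -
  have fin: "finite V" using g by (simp add: graph_def)
  have "c ` V = {1..k}" using gc unfolding grundy_coloring_def by simp
  then have "card {1..k} = card (c ` V)" by simp
  also have "\<dots> \<le> card V" by (rule card_image_le[OF fin])
  finally show ?thesis by simp
qed

lemma grundy_val:
  assumes gc: "grundy_coloring V E c k" and x: "x \<in> V"
  shows "1 \<le> c x \<and> c x \<le> k"
proof -
  have "c x \<in> c ` V" using x by simp
  then have "c x \<in> {1..k}" using gc unfolding grundy_coloring_def by simp
  then show ?thesis by simp
qed

theorem proposition3:
  fixes V :: "'a set" and E :: "'a \<Rightarrow> 'a \<Rightarrow> bool"
  assumes "graph V E" and "V \<noteq> {}" and "block_graph V E"
  shows "(\<exists>w\<in>V. grundy_vertex V E w = grundy_number V E)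
       \<and> (grundy_number V E > clique_number V E \<longrightarrow>
            (\<forall>w\<in>V. grundy_vertex V E w = grundy_number V E \<longrightarrow> cut_vertex V E w))"
proof -
  note g = assms(1)
  have fin: "finite V" using g by (simp add: graph_def)
  have s: "\<forall>a b. E a b \<longrightarrow> E b a" using graph_sym[OF g] .
  define Ks where "Ks = {k. \<exists>c. grundy_coloring V E c k}"
  define G where "G = grundy_number V E"
  have GM: "G = Max Ks" unfolding G_def grundy_number_def Ks_def by simp
  have finK: "finite Ks"
  proof (rule finite_subset[of _ "{..card V}"])
    show "Ks \<subseteq> {..card V}" unfolding Ks_def using grundy_bound[OF g] by auto
  qed simp
  have neK: "Ks \<noteq> {}" using grundy_exists[OF g assms(2)] unfolding Ks_def by blast
  have "G \<in> Ks" unfolding GM by (rule Max_in[OF finK neK])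
  then obtain c0 where c0: "grundy_coloring V E c0 G" unfolding Ks_def by blast
  have kleG: "k \<le> G" if "grundy_coloring V E c k" for c k
    unfolding GM using Max_ge[OF finK] that Ks_def by blast
  define Cs where "Cs w = {c w | c. \<exists>k. grundy_coloring V E c k}" for w
  have gvM: "grundy_vertex V E w = Max (Cs w)" for w unfolding grundy_vertex_def Cs_def by simp
  have Cs_le: "x \<le> G" if xC: "x \<in> Cs w" and wV: "w \<in> V" for x w
  proof -
    obtain c k where "x = c w" "grundy_coloring V E c k" using xC by (auto simp: Cs_def)
    then show ?thesis using grundy_val[of V E c k w] wV kleG by fastforce
  qed
  have finCs: "finite (Cs w)" if "w \<in> V" for w
    by (rule finite_subset[of _ "{..G}"]) (use Cs_le that in auto)
  have neCs: "Cs w \<noteq> {}" for w using c0 unfolding Cs_def by blast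
  have gv_le: "grundy_vertex V E w \<le> G" if "w \<in> V" for w
    unfolding gvM using Max_le_iff[OF finCs[OF that] neCs] Cs_le that by blast
  have part1: "\<exists>w\<in>V. grundy_vertex V E w = G"
  proof -
    obtain x where x: "x \<in> V" using assms(2) by blast
    have "1 \<le> c0 x \<and> c0 x \<le> G" by (rule grundy_val[OF c0 x])
    then have "G \<in> {1..G}" by simp
    then have "G \<in> c0 ` V" using c0 unfolding grundy_coloring_def by simp
    then obtain w where w: "w \<in> V" "c0 w = G" by blast
    have "G \<in> Cs w" unfolding Cs_def using c0 w by blast
    then have "G \<le> grundy_vertex V E w" unfolding gvM by (rule Max_ge[OF finCs[OF w(1)]])
    then show ?thesis using gv_le[OF w(1)] w(1) by (intro bexI[of _ w]) auto
  qed
  have part2: "cut_vertex V E w"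
    if gt: "G > clique_number V E" and w: "w \<in> V" and gw: "grundy_vertex V E w = G" for w
  proof (rule ccontr)
    assume nc: "\<not> cut_vertex V E w"
    have "Max (Cs w) \<in> Cs w" by (rule Max_in[OF finCs[OF w] neCs])
    then have "G \<in> Cs w" using gw gvM by simp
    then obtain c k where ck: "grundy_coloring V E c k" "c w = G" unfolding Cs_def by blast
    define K where "K = insert w {u \<in> V. E w u}"
    have KV: "K \<subseteq> V" using w K_def by auto
    have finKK: "finite K" using KV fin finite_subset by blast
    have cl: "is_clique E K"
      unfolding is_clique_def
    proof (intro ballI impI)
      fix x y assume x: "x \<in> K" and y: "y \<in> K" and xy: "x \<noteq> y"
      show "E x y"
      proof (cases "x = w")
        case True then show ?thesis using y xy K_def by auto
      next
        case False
        then have ex: "E w x" using x K_def by auto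
        show ?thesis
        proof (cases "y = w")
          case True then show ?thesis using ex s by blast
        next
          case False
          then have ey: "E w y" using y K_def by auto
          show ?thesis by (rule nbrs_adj[OF g assms(3) w nc ex ey xy])
        qed
      qed
    qed
    have "{1..G} \<subseteq> c ` K"
    proof
      fix i assume i: "i \<in> {1..G}"
      show "i \<in> c ` K"
      proof (cases "i = G")
        case True then show ?thesis using ck K_def by auto
      next
        case False
        then have "1 \<le> i \<and> i < c w" using i ck by simp
        then obtain u where "u \<in> V" "E w u" "c u = i"
          using ck(1) w unfolding grundy_coloring_def by blast
        then show ?thesis unfolding K_def by blast
      qed
    qed
    then have "card {1..G} \<le> card (c ` K)" by (rule card_mono[OF finite_imageI[OF finKK]])
    also have "\<dots> \<le> card K" by (rule card_image_le[OF finKK])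
    finally have GK: "G \<le> card K" by simp
    have "{card K | K. K \<subseteq> V \<and> is_clique E K} \<subseteq> card ` Pow V" by blast
    then have "finite {card K | K. K \<subseteq> V \<and> is_clique E K}"
      using fin finite_subset by blast
    moreover have "card K \<in> {card K | K. K \<subseteq> V \<and> is_clique E K}" using KV cl by blast
    ultimately have "card K \<le> clique_number V E" unfolding clique_number_def by (rule Max_ge)
    then show False using GK gt by simp
  qed
  show ?thesis using part1 part2 unfolding G_def by blast
qed

end
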